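(* For every sufficiently small $\nu>0$ there exists $\alpha_0>0$ such that for all $\alpha,\varepsilon\in(0,\alpha_0]$ there exists $\gamma_0>0$ such that for all $\gamma\in(0,\gamma_0]$ there exists $n_0$ such that for all $n\ge n_0$: every graph $G$ on $n$ vertices with $\delta(G)\ge n/2$ that is $\gamma$-close to $K_{n/2,n/2}$ is an $(\alpha,\varepsilon,\nu)$-superextremal biclique.
   Context: A graph $G$ on $n$ vertices is $\gamma$-close to $K_{n/2,n/2}$ if there exists $A\subseteq V(G)$ with $|A|=\lfloor n/2\rfloor$ such that $G[A]$ has at most $\gamma n^2$ edges. $d(v,X)$ is the number of neighbours of $v$ in $X$. A graph $G$ on $n$ vertices is an $(\alpha,\varepsilon,\nu)$-superextremal biclique if there is a partition $V(G)=A\uplus B$ with: (B1) $0\le |B|-|A|\le\alpha n$; (B2) $d(a,B)\ge(1/2-\varepsilon)n$ for all but at most $\alpha n$ vertices $a\in A$; (B3) $d(a,B)\ge\nu n$ for all $a\in A$; (B4) $d(b,A)\ge(1/2-\varepsilon)n$ for all but at most $\alpha n$ vertices $b\in B$; (B5) $d(b,A)\ge(1/4-\varepsilon)n$ for all $b\in B$; (B6) if $|A|\ne\lfloor n/2\rfloor$, then $d(b,B)\le 2\nu n$ for all $b\in B$. *)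

theory Defs
  imports Main Complex_Main
begin

text \<open>A finite simple graph with vertex set V (vertices are natural numbers, which
is no loss of generality up to isomorphism) and a symmetric irreflexive
adjacency relation E restricted to V.\<close>
definition simple_graph :: "nat set \<Rightarrow> (nat \<Rightarrow> nat \<Rightarrow> bool) \<Rightarrow> bool" where
  "simple_graph V E \<longleftrightarrow> finite V \<and> (\<forall>u v. E u v \<longrightarrow> E v u) \<and> (\<forall>v. \<not> E v v)
     \<and> (\<forall>u v. E u v \<longrightarrow> u \<in> V \<and> v \<in> V)"

definition nbdeg :: "(nat \<Rightarrow> nat \<Rightarrow> bool) \<Rightarrow> nat \<Rightarrow> nat set \<Rightarrow> nat" where
  "nbdeg E v X = card {u \<in> X. E v u}"

definition min_degree_ge :: "nat set \<Rightarrow> (nat \<Rightarrow> nat \<Rightarrow> bool) \<Rightarrow> real \<Rightarrow> bool" where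
  "min_degree_ge V E d \<longleftrightarrow> (\<forall>v\<in>V. real (nbdeg E v V) \<ge> d)"

definition edges_in :: "(nat \<Rightarrow> nat \<Rightarrow> bool) \<Rightarrow> nat set \<Rightarrow> nat" where
  "edges_in E A = card {{u, v} | u v. u \<in> A \<and> v \<in> A \<and> E u v}"

definition gamma_close :: "real \<Rightarrow> nat set \<Rightarrow> (nat \<Rightarrow> nat \<Rightarrow> bool) \<Rightarrow> bool" where
  "gamma_close \<gamma> V E \<longleftrightarrow> (let n = card V in
     \<exists>A \<subseteq> V. card A = n div 2 \<and> real (edges_in E A) \<le> \<gamma> * real n ^ 2)"

definition superextremal_biclique ::
  "real \<Rightarrow> real \<Rightarrow> real \<Rightarrow> nat set \<Rightarrow> (nat \<Rightarrow> nat \<Rightarrow> bool) \<Rightarrow> bool" where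
  "superextremal_biclique \<alpha> \<epsilon> \<nu> V E \<longleftrightarrow> (let n = real (card V) in
     \<exists>A B. A \<union> B = V \<and> A \<inter> B = {} \<and>
       \<comment> \<open>(B1)\<close>
       0 \<le> real (card B) - real (card A) \<and> real (card B) - real (card A) \<le> \<alpha> * n \<and>
       \<comment> \<open>(B2)\<close>
       real (card {a \<in> A. real (nbdeg E a B) < (1/2 - \<epsilon>) * n}) \<le> \<alpha> * n \<and>
       \<comment> \<open>(B3)\<close>
       (\<forall>a\<in>A. real (nbdeg E a B) \<ge> \<nu> * n) \<and>
       \<comment> \<open>(B4)\<close>
       real (card {b \<in> B. real (nbdeg E b A) < (1/2 - \<epsilon>) * n}) \<le> \<alpha> * n \<and>
       \<comment> \<open>(B5)\<close>
       (\<forall>b\<in>B. real (nbdeg E b A) \<ge> (1/4 - \<epsilon>) * n) \<and>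
       \<comment> \<open>(B6)\<close>
       (card A \<noteq> card V div 2 \<longrightarrow> (\<forall>b\<in>B. real (nbdeg E b B) \<le> 2 * \<nu> * n)))"

end

theory Submission
  imports Defs
begin


lemma nbdeg_le_card: "finite X \<Longrightarrow> nbdeg E x X \<le> card X"
  unfolding nbdeg_def by (rule card_mono) auto

lemma nbdeg_mono: "X \<subseteq> Y \<Longrightarrow> finite Y \<Longrightarrow> nbdeg E x X \<le> nbdeg E x Y"
  unfolding nbdeg_def by (rule card_mono) auto

lemma nbdeg_Un_le: "finite X \<Longrightarrow> finite Y \<Longrightarrow> nbdeg E x (X \<union> Y) \<le> nbdeg E x X + card Y"
proof -
  assume f: "finite X" "finite Y"
  have "{u \<in> X \<union> Y. E x u} \<subseteq> {u \<in> X. E x u} \<union> Y" by auto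
  hence "card {u \<in> X \<union> Y. E x u} \<le> card ({u \<in> X. E x u} \<union> Y)"
    using f by (intro card_mono) auto
  also have "\<dots> \<le> card {u \<in> X. E x u} + card Y" by (rule card_Un_le)
  finally show ?thesis unfolding nbdeg_def .
qed

lemma nbdeg_diff_ge: "finite X \<Longrightarrow> finite Y \<Longrightarrow> nbdeg E x X \<le> nbdeg E x (X - Y) + card Y"
proof -
  assume f: "finite X" "finite Y"
  have "X = (X - Y) \<union> (X \<inter> Y)" by auto
  hence "nbdeg E x X \<le> nbdeg E x (X - Y) + card (X \<inter> Y)"
    using nbdeg_Un_le[of "X - Y" "X \<inter> Y" E x] f by (metis finite_Diff finite_Int)
  also have "card (X \<inter> Y) \<le> card Y" using f by (intro card_mono) auto
  finally show ?thesis by simp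
qed

lemma nbdeg_split: "finite X \<Longrightarrow> finite Y \<Longrightarrow> X \<inter> Y = {} \<Longrightarrow>
   nbdeg E x (X \<union> Y) = nbdeg E x X + nbdeg E x Y"
  unfolding nbdeg_def
  by (subst card_Un_disjoint[symmetric]) (auto intro!: arg_cong[where f=card])

lemma nbdeg_sum: "finite X \<Longrightarrow> nbdeg E x X = (\<Sum>v\<in>X. of_bool (E x v))"
  unfolding nbdeg_def by (simp add: Collect_conj_eq Int_commute)

lemma sum_nbdeg_swap:
  assumes "finite S" "finite T" "\<forall>u v. E u v \<longrightarrow> E v u"
  shows "(\<Sum>u\<in>S. nbdeg E u T) = (\<Sum>v\<in>T. nbdeg E v S)"
proof -
  have "(\<Sum>u\<in>S. nbdeg E u T) = (\<Sum>u\<in>S. \<Sum>v\<in>T. (of_bool (E u v)::nat))"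
    using assms by (simp add: nbdeg_sum)
  also have "\<dots> = (\<Sum>v\<in>T. \<Sum>u\<in>S. (of_bool (E u v)::nat))" by (rule sum.swap)
  also have "\<dots> = (\<Sum>v\<in>T. \<Sum>u\<in>S. (of_bool (E v u)::nat))"
  proof -
    have "\<And>u v. E u v = E v u" using assms(3) by blast
    thus ?thesis by simp
  qed
  also have "\<dots> = (\<Sum>v\<in>T. nbdeg E v S)" using assms by (simp add: nbdeg_sum)
  finally show ?thesis .
qed

definition cutv :: "nat set \<Rightarrow> (nat \<Rightarrow> nat \<Rightarrow> bool) \<Rightarrow> nat set \<Rightarrow> nat" where
  "cutv V E S = (\<Sum>u\<in>S. nbdeg E u (V - S))"

lemma cut_sym:
  assumes "simple_graph V E" "S \<subseteq> V"
  shows "cutv V E (V - S) = cutv V E S"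
proof -
  have f: "finite V" using assms unfolding simple_graph_def by auto
  have "V - (V - S) = S" using assms by auto
  thus ?thesis unfolding cutv_def
    using sum_nbdeg_swap[of "V - S" S E] f assms(1) finite_subset[OF assms(2) f]
    unfolding simple_graph_def by auto
qed

lemma cut_insert:
  assumes sg: "simple_graph V E" and S: "S \<subseteq> V" and y: "y \<in> V" "y \<notin> S"
  shows "int (cutv V E (insert y S)) = int (cutv V E S) + int (nbdeg E y (V - S)) - int (nbdeg E y S)"
proof -
  have f: "finite V" and sym: "\<forall>u v. E u v \<longrightarrow> E v u" and irr: "\<forall>v. \<not> E v v"
    using sg unfolding simple_graph_def by auto
  have fS: "finite S" using finite_subset[OF S f] .
  have e1: "V - insert y S = (V - S) - {y}" by auto
  have "cutv V E (insert y S) = nbdeg E y (V - S - {y}) + (\<Sum>u\<in>S. nbdeg E u (V - S - {y}))"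
    unfolding cutv_def e1 using fS y by simp
  moreover have "nbdeg E y (V - S - {y}) = nbdeg E y (V - S)"
    unfolding nbdeg_def using irr by (intro arg_cong[where f=card]) auto
  moreover have "\<And>u. u \<in> S \<Longrightarrow> nbdeg E u (V - S) = nbdeg E u (V - S - {y}) + of_bool (E u y)"
  proof -
    fix u assume "u \<in> S"
    have "V - S = (V - S - {y}) \<union> {y}" using y by auto
    hence "nbdeg E u (V - S) = nbdeg E u (V - S - {y}) + nbdeg E u {y}"
      using nbdeg_split[of "V - S - {y}" "{y}" E u] f by auto
    moreover have "nbdeg E u {y} = of_bool (E u y)"
      unfolding nbdeg_def by (cases "E u y") (auto simp: Collect_conv_if)
    ultimately show "nbdeg E u (V - S) = nbdeg E u (V - S - {y}) + of_bool (E u y)" by simp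
  qed
  hence "cutv V E S = (\<Sum>u\<in>S. nbdeg E u (V - S - {y})) + (\<Sum>u\<in>S. (of_bool (E u y)::nat))"
    unfolding cutv_def by (simp add: sum.distrib)
  moreover have "(\<Sum>u\<in>S. (of_bool (E u y)::nat)) = nbdeg E y S"
    using fS sym by (subst nbdeg_sum) (auto intro!: sum.cong arg_cong[where f=card])
  ultimately show ?thesis by simp
qed

lemma handshake:
  assumes sg: "simple_graph V E" and A: "A \<subseteq> V"
  shows "(\<Sum>a\<in>A. nbdeg E a A) \<le> 2 * edges_in E A"
proof -
  have f: "finite V" and sym: "\<forall>u v. E u v \<longrightarrow> E v u" and irr: "\<forall>v. \<not> E v v"
    using sg unfolding simple_graph_def by auto
  have fA: "finite A" using finite_subset[OF A f] .
  define P where "P = (SIGMA a:A. {u \<in> A. E a u})"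
  have cP: "(\<Sum>a\<in>A. nbdeg E a A) = card P" unfolding P_def nbdeg_def using fA by simp
  define Ed where "Ed = {{u, v} | u v. u \<in> A \<and> v \<in> A \<and> E u v}"
  have fEd: "finite Ed" unfolding Ed_def
    by (rule finite_subset[of _ "Pow A"]) (use fA in auto)
  define P1 where "P1 = {p \<in> P. fst p < snd p}"
  define P2 where "P2 = {p \<in> P. snd p < fst p}"
  have fP: "finite P" unfolding P_def using fA by auto
  have "P \<subseteq> P1 \<union> P2" unfolding P1_def P2_def P_def using irr by (auto simp: linorder_neq_iff) (metis linorder_neq_iff)
  hence "card P \<le> card (P1 \<union> P2)" using fP P1_def P2_def by (intro card_mono) auto
  also have "\<dots> \<le> card P1 + card P2" by (rule card_Un_le)
  also have "card P1 \<le> card Ed"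
  proof (rule card_inj_on_le[where f="\<lambda>p. {fst p, snd p}"])
    show "inj_on (\<lambda>p. {fst p, snd p}) P1" unfolding P1_def inj_on_def
      by (auto simp: doubleton_eq_iff)
    show "(\<lambda>p. {fst p, snd p}) ` P1 \<subseteq> Ed" unfolding P1_def P_def Ed_def by force
  qed (rule fEd)
  also have "card P2 \<le> card Ed"
  proof (rule card_inj_on_le[where f="\<lambda>p. {fst p, snd p}"])
    show "inj_on (\<lambda>p. {fst p, snd p}) P2" unfolding P2_def inj_on_def
      by (auto simp: doubleton_eq_iff)
    show "(\<lambda>p. {fst p, snd p}) ` P2 \<subseteq> Ed" unfolding P2_def P_def Ed_def by force
  qed (rule fEd)
  finally show ?thesis using cP unfolding edges_in_def Ed_def by simp
qed

lemma markov_count: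
  fixes g :: "'a \<Rightarrow> real"
  assumes "finite X" "\<And>x. x \<in> X \<Longrightarrow> g x \<ge> 0" "\<And>x. x \<in> X \<Longrightarrow> P x \<Longrightarrow> g x \<ge> c"
  shows "real (card {x \<in> X. P x}) * c \<le> (\<Sum>x\<in>X. g x)"
proof -
  have "real (card {x \<in> X. P x}) * c = (\<Sum>x\<in>{x \<in> X. P x}. c)" by simp
  also have "\<dots> \<le> (\<Sum>x\<in>{x \<in> X. P x}. g x)" using assms by (intro sum_mono) auto
  also have "\<dots> \<le> (\<Sum>x\<in>X. g x)" using assms by (intro sum_mono2) auto
  finally show ?thesis .
qed



lemma nbdeg_insert_self:
  assumes "\<forall>v. \<not> E v v" shows "nbdeg E x (insert x X) = nbdeg E x X"
  unfolding nbdeg_def using assms by (intro arg_cong[where f=card]) auto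

lemma nbdeg_remove_self:
  assumes "\<forall>v. \<not> E v v" shows "nbdeg E x (X - {x}) = nbdeg E x X"
  unfolding nbdeg_def using assms by (intro arg_cong[where f=card]) auto

lemma exists_good_A:
  assumes sg: "simple_graph V E" and A0: "A0 \<subseteq> V" "card A0 = card V div 2"
  shows "\<exists>A. A \<subseteq> V \<and> card A = card V div 2 \<and> cutv V E A0 \<le> cutv V E A \<and>
     (\<forall>b\<in>V - A. nbdeg E b (V - A) \<le> nbdeg E b A)"
proof -
  have f: "finite V" and irr: "\<forall>v. \<not> E v v"
    using sg unfolding simple_graph_def by auto
  define p where "p = card V div 2"
  define S where "S = {A. A \<subseteq> V \<and> card A = p}"
  have fS: "finite S" unfolding S_def
    by (rule finite_subset[of _ "Pow V"]) (use f in auto)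
  have A0S: "A0 \<in> S" unfolding S_def p_def using A0 by auto
  define m where "m = Max (cutv V E ` S)"
  have "m \<in> cutv V E ` S" unfolding m_def using fS A0S by (intro Max_in) auto
  then obtain A where AS: "A \<in> S" and Am: "cutv V E A = m" by auto
  have max: "\<And>A'. A' \<in> S \<Longrightarrow> cutv V E A' \<le> cutv V E A"
    unfolding Am m_def using fS by (intro Max_ge) auto
  have AV: "A \<subseteq> V" and cA: "card A = p" using AS unfolding S_def by auto
  have fA: "finite A" using finite_subset[OF AV f] .
  have cVA: "card (V - A) = card V - p" using AV f cA by (simp add: card_Diff_subset fA)
  show ?thesis
  proof (cases "\<forall>b\<in>V - A. nbdeg E b (V - A) \<le> nbdeg E b A")
    case True thus ?thesis using AV cA max[OF A0S] p_def by auto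
  next
    case False
    then obtain y where y: "y \<in> V" "y \<notin> A" and ylt: "nbdeg E y A < nbdeg E y (V - A)"
      by (auto simp: not_le)
    have ci: "int (cutv V E (insert y A)) = int (cutv V E A) + int (nbdeg E y (V - A)) - int (nbdeg E y A)"
      by (rule cut_insert[OF sg AV y])
    show ?thesis
    proof (cases "even (card V)")
      case False
      define A1 where "A1 = V - insert y A"
      have "card (insert y A) = p + 1" using y fA cA by simp
      hence "card A1 = p" unfolding A1_def using False f AV y p_def fA
        by (subst card_Diff_subset) (auto elim!: oddE)
      hence "A1 \<in> S" unfolding S_def A1_def by auto
      moreover have "cutv V E A1 = cutv V E (insert y A)"
        unfolding A1_def using AV y by (intro cut_sym[OF sg]) auto
      ultimately show ?thesis using max ci ylt by force
    next
      case True
      have claim: "\<forall>x\<in>A. nbdeg E x A \<le> nbdeg E x (V - A)"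
      proof (rule ccontr)
        assume "\<not> ?thesis"
        then obtain x where x: "x \<in> A" and xlt: "nbdeg E x (V - A) < nbdeg E x A"
          by (auto simp: not_le)
        define A2 where "A2 = insert y (A - {x})"
        have xy: "x \<noteq> y" using x y by auto
        have "card A2 = p" unfolding A2_def using x y fA cA
          by (simp add: card_Diff_singleton) (metis Suc_pred card_gt_0_iff empty_iff)
        hence A2S: "A2 \<in> S" unfolding S_def A2_def using AV y by auto
        have c1: "int (cutv V E (insert x (A - {x}))) = int (cutv V E (A - {x})) + int (nbdeg E x (V - (A - {x}))) - int (nbdeg E x (A - {x}))"
          by (rule cut_insert[OF sg]) (use AV x in auto)
        have e1: "insert x (A - {x}) = A" using x by auto
        have e2: "V - (A - {x}) = insert x (V - A)" using x AV by auto
        have c2: "int (cutv V E A2) = int (cutv V E (A - {x})) + int (nbdeg E y (V - (A - {x}))) - int (nbdeg E y (A - {x}))"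
          unfolding A2_def by (rule cut_insert[OF sg]) (use AV y in auto)
        have m1: "nbdeg E y (V - A) \<le> nbdeg E y (V - (A - {x}))"
          using f by (intro nbdeg_mono) auto
        have m2: "nbdeg E y (A - {x}) \<le> nbdeg E y A"
          using fA by (intro nbdeg_mono) auto
        have "cutv V E A2 > cutv V E A"
          using c1 c2 m1 m2 xlt ylt unfolding e1 e2 nbdeg_insert_self[of E, OF irr] nbdeg_remove_self[of E, OF irr]
          by linarith
        thus False using max[OF A2S] by simp
      qed
      have "card (V - A) = p" using cVA True p_def by auto
      moreover have "cutv V E (V - A) = cutv V E A" by (rule cut_sym[OF sg AV])
      moreover have "V - (V - A) = A" using AV by auto
      ultimately show ?thesis using claim max[OF A0S] p_def by (intro exI[of _ "V - A"]) auto
    qed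
  qed
qed



lemma cut_lower:
  assumes sg: "simple_graph V E" and md: "\<forall>v\<in>V. real (nbdeg E v V) \<ge> real (card V) / 2"
    and A0: "A0 \<subseteq> V"
  shows "real (cutv V E A0) \<ge> real (card A0) * real (card V) / 2 - 2 * real (edges_in E A0)"
proof -
  have f: "finite V" using sg unfolding simple_graph_def by auto
  have fA: "finite A0" using finite_subset[OF A0 f] .
  have sp: "\<And>a. nbdeg E a V = nbdeg E a A0 + nbdeg E a (V - A0)"
  proof -
    fix a have "V = A0 \<union> (V - A0)" using A0 by auto
    thus "nbdeg E a V = nbdeg E a A0 + nbdeg E a (V - A0)"
      using nbdeg_split[of A0 "V - A0" E a] fA f by auto
  qed
  have "(\<Sum>a\<in>A0. real (nbdeg E a V)) = (\<Sum>a\<in>A0. real (nbdeg E a A0)) + real (cutv V E A0)"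
    unfolding cutv_def by (simp add: sp sum.distrib)
  moreover have "(\<Sum>a\<in>A0. real (nbdeg E a V)) \<ge> (\<Sum>a\<in>A0. real (card V) / 2)"
    using md A0 by (intro sum_mono) auto
  moreover have "(\<Sum>a\<in>A0. real (nbdeg E a A0)) \<le> 2 * real (edges_in E A0)"
    using handshake[OF sg A0] by (metis of_nat_le_iff of_nat_mult of_nat_numeral of_nat_sum)
  ultimately show ?thesis by simp
qed



lemma core:
  assumes sg: "simple_graph V E"
    and md: "\<forall>v\<in>V. real (nbdeg E v V) \<ge> real (card V) / 2"
    and AV: "A \<subseteq> V" and cA: "card A = card V div 2"
    and Cl: "real (cutv V E A) \<ge> real (card A) * real (card V) / 2 - 2 * \<gamma> * real (card V) ^ 2"
    and orient: "\<forall>b\<in>V - A. nbdeg E b (V - A) \<le> nbdeg E b A"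
    and nu: "0 < \<nu>" "\<nu> \<le> 1/6" and al: "0 < \<alpha>" "\<alpha> \<le> 1" and ep: "0 < \<epsilon>" "\<epsilon> \<le> 1"
    and ga: "0 < \<gamma>" "\<gamma> \<le> \<alpha> * \<epsilon> * \<nu> / 100"
    and n1: "real (card V) \<ge> 1 / \<gamma>" and n2: "real (card V) \<ge> 2 / \<alpha>" and n3: "real (card V) \<ge> 2 / \<epsilon>"
  shows "superextremal_biclique \<alpha> \<epsilon> \<nu> V E"
proof -
  have f: "finite V" and sym: "\<forall>u v. E u v \<longrightarrow> E v u" and irr: "\<forall>v. \<not> E v v"
    using sg unfolding simple_graph_def by auto
  define N where "N = real (card V)"
  define B where "B = V - A"
  define p where "p = card A"
  define q where "q = card B"
  define C where "C = cutv V E A"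
  have fA: "finite A" using finite_subset[OF AV f] .
  have fB: "finite B" unfolding B_def using f by auto
  have Npos: "N > 0" using n1 ga unfolding N_def
    by (metis less_le_trans zero_less_divide_1_iff)
  have pq: "p + q = card V" unfolding p_def q_def B_def using AV fA f
    by (simp add: card_Diff_subset card_mono)
  have e2: "card V = 2 * (card V div 2) + card V mod 2" by simp
  have m2: "card V mod 2 \<le> 1" by simp
  have e3: "real (card V) = 2 * real (card V div 2) + real (card V mod 2)"
    using arg_cong[OF e2, of real] by (simp only: of_nat_add of_nat_mult of_nat_numeral)
  have m3: "real (card V mod 2) \<le> 1" using m2 by simp
  have pN: "real p \<le> N / 2" "real p \<ge> (N - 1) / 2" unfolding p_def cA N_def using e3 m3 by (simp_all add: field_simps)
  have pqr: "real p + real q = N" unfolding N_def using pq by (metis of_nat_add)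
  have qN: "real q \<ge> N / 2" "real q \<le> (N + 1) / 2" using pqr pN by (simp_all add: field_simps)
  have qp: "q \<ge> p" using qN pN by linarith
  have nuN: "\<nu> * N \<le> N / 6" using mult_right_mono[OF nu(2), of N] Npos by simp
  have gN: "\<gamma> * N \<ge> 1" using n1 ga unfolding N_def by (simp add: field_simps)
  have CB: "C = (\<Sum>b\<in>B. nbdeg E b A)" unfolding C_def cutv_def B_def
    using sum_nbdeg_swap[of A "V - A" E] fA f sym by auto
  have CA: "C = (\<Sum>a\<in>A. nbdeg E a B)" unfolding C_def cutv_def B_def ..
  have M: "real p * real q - real C \<le> 3 * \<gamma> * N ^ 2"
  proof -
    have "real p * real q - real C \<le> real p * (real q - N / 2) + 2 * \<gamma> * N ^ 2"
      using Cl unfolding C_def p_def N_def by (simp add: algebra_simps)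
    also have "real p * (real q - N / 2) \<le> (N / 2) * (1 / 2)"
      using pN qN by (intro mult_mono) auto
    also have "(N / 2) * (1 / 2) \<le> \<gamma> * N ^ 2"
    proof -
      have "N * 1 \<le> N * (\<gamma> * N)" using gN Npos by (intro mult_left_mono) auto
      hence "N \<le> \<gamma> * N ^ 2" by (simp add: power2_eq_square algebra_simps)
      thus ?thesis using Npos by linarith
    qed
    finally show ?thesis by simp
  qed
  have MA: "(\<Sum>a\<in>A. real q - real (nbdeg E a B)) = real p * real q - real C"
    unfolding CA by (simp add: sum_subtractf p_def)
  have MB: "(\<Sum>b\<in>B. real p - real (nbdeg E b A)) = real p * real q - real C"
    unfolding CB by (simp add: sum_subtractf q_def)
  have gA: "\<And>a. real q - real (nbdeg E a B) \<ge> 0"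
    using nbdeg_le_card[OF fB] unfolding q_def by (simp add: of_nat_le_iff)
  have gB: "\<And>b. real p - real (nbdeg E b A) \<ge> 0"
    using nbdeg_le_card[OF fA] unfolding p_def by (simp add: of_nat_le_iff)
  have degsplit: "\<And>x. nbdeg E x V = nbdeg E x A + nbdeg E x B"
  proof -
    fix x have "V = A \<union> B" using AV unfolding B_def by auto
    thus "nbdeg E x V = nbdeg E x A + nbdeg E x B"
      using nbdeg_split[of A B E x] fA fB unfolding B_def by auto
  qed
  define H where "H = {a \<in> A. real (nbdeg E a B) < 3/2 * \<nu> * N}"
  define h where "h = card H"
  have HA: "H \<subseteq> A" unfolding H_def by auto
  have fH: "finite H" using finite_subset[OF HA fA] .
  have hb: "real h \<le> 12 * \<gamma> * N"
  proof -
    have "real h * (N / 4) \<le> (\<Sum>a\<in>A. real q - real (nbdeg E a B))"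
      unfolding h_def H_def
    proof (rule markov_count[OF fA gA])
      fix a assume "a \<in> A" "real (nbdeg E a B) < 3/2 * \<nu> * N"
      thus "real q - real (nbdeg E a B) \<ge> N / 4" using qN nuN by linarith
    qed
    hence "real h * (N / 4) \<le> 3 * \<gamma> * N ^ 2" using MA M by linarith
    hence "real h * N \<le> (12 * \<gamma> * N) * N" by (simp add: power2_eq_square algebra_simps)
    thus ?thesis using Npos by (simp add: mult_le_cancel_right)
  qed
  have g1: "12 * \<gamma> * N \<le> (\<alpha> * \<epsilon> * \<nu> / 8) * N"
    using ga Npos by (intro mult_right_mono) auto
  have ae: "\<alpha> * \<epsilon> \<le> 1" using al ep by (intro mult_le_one) auto
  have an: "\<alpha> * \<nu> \<le> 1" using al nu by (intro mult_le_one) auto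
  have en: "\<epsilon> * \<nu> \<le> 1" using ep nu by (intro mult_le_one) auto
  have aen1: "\<alpha> * \<epsilon> * \<nu> \<le> \<nu>" using mult_right_mono[OF ae, of \<nu>] nu by simp
  have aen2: "\<alpha> * \<epsilon> * \<nu> \<le> \<epsilon>" using mult_left_mono[OF an, of \<epsilon>] ep
    by (simp add: algebra_simps)
  have aen3: "\<alpha> * \<epsilon> * \<nu> \<le> \<alpha>" using mult_left_mono[OF en, of \<alpha>] al
    by (simp add: algebra_simps)
  have hnu: "real h \<le> \<nu> * N / 2"
  proof -
    have "\<alpha> * \<epsilon> * \<nu> / 8 * N \<le> \<nu> / 8 * N"
      by (intro mult_right_mono) (use aen1 Npos in auto)
    thus ?thesis using hb g1 by linarith
  qed
  have heps: "real h \<le> \<epsilon> * N / 2"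
  proof -
    have "\<alpha> * \<epsilon> * \<nu> / 8 * N \<le> \<epsilon> / 8 * N"
      by (intro mult_right_mono) (use aen2 Npos in auto)
    thus ?thesis using hb g1 by linarith
  qed
  have hal: "real h \<le> \<alpha> * N / 4"
  proof -
    have "\<alpha> * \<epsilon> * \<nu> / 8 * N \<le> \<alpha> / 8 * N"
      by (intro mult_right_mono) (use aen3 Npos in auto)
    thus ?thesis using hb g1 by linarith
  qed
  define T where "T = {b \<in> B. real (nbdeg E b B) \<ge> 3/2 * \<nu> * N}"
  have TB: "T \<subseteq> B" unfolding T_def by auto
  obtain J where JT: "J \<subseteq> T" and cJ: "card J = min h (card T)" and fJ: "finite J"
    using obtain_subset_with_card_n[of "min h (card T)" T] by auto
  define j where "j = card J"
  have jh: "j \<le> h" unfolding j_def cJ by simp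
  have JB: "J \<subseteq> B" using JT TB by auto
  define A' where "A' = (A - H) \<union> J"
  define B' where "B' = (B - J) \<union> H"
  have AB: "A \<inter> B = {}" unfolding B_def by auto
  have fA': "finite A'" unfolding A'_def using fA fJ by auto
  have fB': "finite B'" unfolding B'_def using fB fH by auto
  have cA': "card A' = p - h + j" unfolding A'_def p_def h_def j_def
    using fA fJ fH HA JB AB by (subst card_Un_disjoint) (auto simp: card_Diff_subset)
  have hp: "h \<le> p" unfolding h_def p_def using fA HA by (rule card_mono)
  have jq: "j \<le> q" unfolding j_def q_def using fB JB by (rule card_mono)
  have cB': "card B' = q - j + h" unfolding B'_def q_def h_def j_def
    using fB fJ fH HA JB AB by (subst card_Un_disjoint) (auto simp: card_Diff_subset)
  have un: "A' \<union> B' = V" unfolding A'_def B'_def B_def using HA JB AV B_def by auto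
  have int: "A' \<inter> B' = {}" unfolding A'_def B'_def using HA JB AB by auto
  have dB'lo: "\<And>x. real (nbdeg E x B) - real h \<le> real (nbdeg E x B')"
  proof -
    fix x
    have "nbdeg E x B \<le> nbdeg E x (B - J) + card J" by (rule nbdeg_diff_ge[OF fB fJ])
    moreover have "nbdeg E x (B - J) \<le> nbdeg E x B'" unfolding B'_def using fB' B'_def
      by (intro nbdeg_mono) auto
    ultimately show "real (nbdeg E x B) - real h \<le> real (nbdeg E x B')" using jh j_def by linarith
  qed
  have dB'hi: "\<And>x. real (nbdeg E x B') \<le> real (nbdeg E x B) + real h"
  proof -
    fix x
    have "nbdeg E x B' \<le> nbdeg E x (B - J) + card H" unfolding B'_def
      by (rule nbdeg_Un_le) (use fB fH in auto)
    moreover have "nbdeg E x (B - J) \<le> nbdeg E x B" using fB by (intro nbdeg_mono) auto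
    ultimately show "real (nbdeg E x B') \<le> real (nbdeg E x B) + real h" unfolding h_def by linarith
  qed
  have dA'lo: "\<And>x. real (nbdeg E x A) - real h \<le> real (nbdeg E x A')"
  proof -
    fix x
    have "nbdeg E x A \<le> nbdeg E x (A - H) + card H" by (rule nbdeg_diff_ge[OF fA fH])
    moreover have "nbdeg E x (A - H) \<le> nbdeg E x A'" unfolding A'_def using fA' A'_def
      by (intro nbdeg_mono) auto
    ultimately show "real (nbdeg E x A) - real h \<le> real (nbdeg E x A')" unfolding h_def by linarith
  qed
  have gae: "\<gamma> \<le> \<alpha> * \<epsilon> / 600"
  proof -
    have "\<alpha> * \<epsilon> * \<nu> \<le> \<alpha> * \<epsilon> * (1/6)" using nu al ep by (intro mult_left_mono) auto
    thus ?thesis using ga by linarith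
  qed
  have cVN: "real (card V) = N" unfolding N_def ..
  show ?thesis
    unfolding superextremal_biclique_def Let_def cVN
  proof (rule exI[of _ A'], rule exI[of _ B'], intro conjI)
    show "A' \<union> B' = V" by (rule un)
    show "A' \<inter> B' = {}" by (rule int)
    show "0 \<le> real (card B') - real (card A')" using cA' cB' jh hp jq qp by simp
    show "real (card B') - real (card A') \<le> \<alpha> * N"
    proof -
      have "real (card B') - real (card A') = real q - real p + 2 * (real h - real j)"
        using cA' cB' jh hp jq by (simp add: of_nat_diff)
      also have "\<dots> \<le> 1 + 2 * real h" using qN pN by simp
      also have "\<dots> \<le> \<alpha> * N"
      proof -
        have "2 \<le> \<alpha> * N" using n2 al unfolding N_def by (simp add: field_simps)
        thus ?thesis using hal by linarith
      qed
      finally show ?thesis .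
    qed
    show "real (card {a \<in> A'. real (nbdeg E a B') < (1/2 - \<epsilon>) * N}) \<le> \<alpha> * N"
    proof -
      define Bad where "Bad = {a \<in> A. real (nbdeg E a B) < (1/2 - \<epsilon>) * N + real h}"
      have sub: "{a \<in> A'. real (nbdeg E a B') < (1/2 - \<epsilon>) * N} \<subseteq> J \<union> Bad"
        unfolding A'_def Bad_def using dB'lo by (auto) (smt (verit) dB'lo)
      have "real (card Bad) * (\<epsilon> * N / 2) \<le> (\<Sum>a\<in>A. real q - real (nbdeg E a B))"
        unfolding Bad_def
      proof (rule markov_count[OF fA gA])
        fix a assume "a \<in> A" "real (nbdeg E a B) < (1/2 - \<epsilon>) * N + real h"
        thus "real q - real (nbdeg E a B) \<ge> \<epsilon> * N / 2" using qN heps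
          by (simp add: algebra_simps)
      qed
      hence "real (card Bad) * (\<epsilon> * N / 2) \<le> 3 * \<gamma> * N ^ 2" using MA M by linarith
      also have "\<dots> \<le> 3 * (\<alpha> * \<epsilon> / 600) * N ^ 2"
        using gae by (intro mult_right_mono mult_left_mono) auto
      also have "\<dots> = (\<alpha> * N / 100) * (\<epsilon> * N / 2)"
        by (simp add: power2_eq_square field_simps)
      finally have "real (card Bad) \<le> \<alpha> * N / 100"
        using ep Npos by (simp add: mult_le_cancel_right)
      hence cb: "real (card Bad) \<le> \<alpha> * N / 2" using al Npos by simp
      have "card {a \<in> A'. real (nbdeg E a B') < (1/2 - \<epsilon>) * N} \<le> card (J \<union> Bad)"
        using sub fJ fA Bad_def by (intro card_mono) auto
      also have "\<dots> \<le> card J + card Bad" by (rule card_Un_le)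
      finally show ?thesis using cb hal jh j_def by linarith
    qed
    show "\<forall>a\<in>A'. \<nu> * N \<le> real (nbdeg E a B')"
    proof
      fix a assume "a \<in> A'"
      hence "real (nbdeg E a B) \<ge> 3/2 * \<nu> * N"
        unfolding A'_def H_def using JT T_def by auto
      thus "\<nu> * N \<le> real (nbdeg E a B')" using dB'lo[of a] hnu by linarith
    qed
    show "real (card {b \<in> B'. real (nbdeg E b A') < (1/2 - \<epsilon>) * N}) \<le> \<alpha> * N"
    proof -
      define Bad where "Bad = {b \<in> B. real (nbdeg E b A) < (1/2 - \<epsilon>) * N + real h}"
      have sub: "{b \<in> B'. real (nbdeg E b A') < (1/2 - \<epsilon>) * N} \<subseteq> H \<union> Bad"
        unfolding B'_def Bad_def using dA'lo by (auto) (smt (verit) dA'lo)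
      have "real (card Bad) * (\<epsilon> * N / 4) \<le> (\<Sum>b\<in>B. real p - real (nbdeg E b A))"
        unfolding Bad_def
      proof (rule markov_count[OF fB gB])
        fix b assume "b \<in> B" "real (nbdeg E b A) < (1/2 - \<epsilon>) * N + real h"
        moreover have "1/2 \<le> \<epsilon> * N / 4" using n3 ep unfolding N_def by (simp add: field_simps)
        ultimately show "real p - real (nbdeg E b A) \<ge> \<epsilon> * N / 4" using pN heps
          by (simp add: algebra_simps)
      qed
      hence "real (card Bad) * (\<epsilon> * N / 4) \<le> 3 * \<gamma> * N ^ 2" using MB M by linarith
      also have "\<dots> \<le> 3 * (\<alpha> * \<epsilon> / 600) * N ^ 2"
        using gae by (intro mult_right_mono mult_left_mono) auto
      also have "\<dots> = (\<alpha> * N / 50) * (\<epsilon> * N / 4)"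
        by (simp add: power2_eq_square field_simps)
      finally have "real (card Bad) \<le> \<alpha> * N / 50"
        using ep Npos by (simp add: mult_le_cancel_right)
      hence cb: "real (card Bad) \<le> \<alpha> * N / 2" using al Npos by simp
      have "card {b \<in> B'. real (nbdeg E b A') < (1/2 - \<epsilon>) * N} \<le> card (H \<union> Bad)"
        using sub fH fB Bad_def by (intro card_mono) auto
      also have "\<dots> \<le> card H + card Bad" by (rule card_Un_le)
      finally show ?thesis using cb hal h_def by linarith
    qed
    show "\<forall>b\<in>B'. (1/4 - \<epsilon>) * N \<le> real (nbdeg E b A')"
    proof
      fix b assume b: "b \<in> B'"
      have bV: "b \<in> V" using b un by auto
      have dg: "real (nbdeg E b A) + real (nbdeg E b B) \<ge> N / 2"
        using md bV degsplit[of b] unfolding N_def by auto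
      have "real (nbdeg E b A) \<ge> N / 4"
      proof (cases "b \<in> H")
        case True
        thus ?thesis using dg nuN unfolding H_def by auto
      next
        case False
        hence "b \<in> B" using b unfolding B'_def by auto
        hence "nbdeg E b B \<le> nbdeg E b A" using orient B_def by auto
        thus ?thesis using dg by linarith
      qed
      thus "(1/4 - \<epsilon>) * N \<le> real (nbdeg E b A')" using dA'lo[of b] heps ep Npos
        by (simp add: algebra_simps)
    qed
    show "card A' \<noteq> card V div 2 \<longrightarrow> (\<forall>b\<in>B'. real (nbdeg E b B') \<le> 2 * \<nu> * N)"
    proof (intro impI ballI)
      fix b assume ne: "card A' \<noteq> card V div 2" and b: "b \<in> B'"
      have "j \<noteq> h" using ne cA' hp cA p_def by auto
      hence "card J = card T" using cJ j_def by auto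
      hence JeT: "J = T" using JT fB TB finite_subset card_subset_eq by metis
      have "real (nbdeg E b B) < 3/2 * \<nu> * N"
      proof (cases "b \<in> H")
        case True thus ?thesis unfolding H_def by auto
      next
        case False
        hence "b \<in> B - T" using b JeT unfolding B'_def by auto
        thus ?thesis unfolding T_def by auto
      qed
      thus "real (nbdeg E b B') \<le> 2 * \<nu> * N" using dB'hi[of b] hnu by linarith
    qed
  qed
qed



theorem mainTheorem11:
  shows "\<exists>\<nu>\<^sub>0>0. \<forall>\<nu>. 0 < \<nu> \<and> \<nu> \<le> \<nu>\<^sub>0 \<longrightarrow>
    (\<exists>\<alpha>\<^sub>0>0. \<forall>\<alpha> \<epsilon>. 0 < \<alpha> \<and> \<alpha> \<le> \<alpha>\<^sub>0 \<and> 0 < \<epsilon> \<and> \<epsilon> \<le> \<alpha>\<^sub>0 \<longrightarrow>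
      (\<exists>\<gamma>\<^sub>0>0. \<forall>\<gamma>. 0 < \<gamma> \<and> \<gamma> \<le> \<gamma>\<^sub>0 \<longrightarrow>
        (\<exists>n\<^sub>0::nat. \<forall>n\<ge>n\<^sub>0. \<forall>V E.
           simple_graph V E \<and> card V = n \<and> min_degree_ge V E (real n / 2) \<and>
           gamma_close \<gamma> V E \<longrightarrow> superextremal_biclique \<alpha> \<epsilon> \<nu> V E)))"
proof (rule exI[of _ "1/6::real"], intro conjI allI impI)
  show "(0::real) < 1/6" by simp
  fix \<nu> :: real assume nu: "0 < \<nu> \<and> \<nu> \<le> 1/6"
  show "\<exists>\<alpha>\<^sub>0>0. \<forall>\<alpha> \<epsilon>. 0 < \<alpha> \<and> \<alpha> \<le> \<alpha>\<^sub>0 \<and> 0 < \<epsilon> \<and> \<epsilon> \<le> \<alpha>\<^sub>0 \<longrightarrow>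
      (\<exists>\<gamma>\<^sub>0>0. \<forall>\<gamma>. 0 < \<gamma> \<and> \<gamma> \<le> \<gamma>\<^sub>0 \<longrightarrow>
        (\<exists>n\<^sub>0::nat. \<forall>n\<ge>n\<^sub>0. \<forall>V E.
           simple_graph V E \<and> card V = n \<and> min_degree_ge V E (real n / 2) \<and>
           gamma_close \<gamma> V E \<longrightarrow> superextremal_biclique \<alpha> \<epsilon> \<nu> V E))"
  proof (rule exI[of _ "1::real"], intro conjI allI impI)
    show "(0::real) < 1" by simp
    fix \<alpha> \<epsilon> :: real assume ae: "0 < \<alpha> \<and> \<alpha> \<le> 1 \<and> 0 < \<epsilon> \<and> \<epsilon> \<le> 1"
    show "\<exists>\<gamma>\<^sub>0>0. \<forall>\<gamma>. 0 < \<gamma> \<and> \<gamma> \<le> \<gamma>\<^sub>0 \<longrightarrow>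
        (\<exists>n\<^sub>0::nat. \<forall>n\<ge>n\<^sub>0. \<forall>V E.
           simple_graph V E \<and> card V = n \<and> min_degree_ge V E (real n / 2) \<and>
           gamma_close \<gamma> V E \<longrightarrow> superextremal_biclique \<alpha> \<epsilon> \<nu> V E)"
    proof (rule exI[of _ "\<alpha> * \<epsilon> * \<nu> / 100"], intro conjI allI impI)
      show "0 < \<alpha> * \<epsilon> * \<nu> / 100" using ae nu by simp
      fix \<gamma> :: real assume g: "0 < \<gamma> \<and> \<gamma> \<le> \<alpha> * \<epsilon> * \<nu> / 100"
      show "\<exists>n\<^sub>0::nat. \<forall>n\<ge>n\<^sub>0. \<forall>V E.
           simple_graph V E \<and> card V = n \<and> min_degree_ge V E (real n / 2) \<and>
           gamma_close \<gamma> V E \<longrightarrow> superextremal_biclique \<alpha> \<epsilon> \<nu> V E"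
      proof (rule exI[of _ "nat \<lceil>1/\<gamma> + 2/\<alpha> + 2/\<epsilon>\<rceil>"], intro allI impI)
        fix n V E
        assume n: "nat \<lceil>1/\<gamma> + 2/\<alpha> + 2/\<epsilon>\<rceil> \<le> n"
          and H: "simple_graph V E \<and> card V = n \<and> min_degree_ge V E (real n / 2) \<and> gamma_close \<gamma> V E"
        have sg: "simple_graph V E" and cV: "card V = n" using H by auto
        have rn: "real n \<ge> 1/\<gamma> + 2/\<alpha> + 2/\<epsilon>"
        proof -
          have "1/\<gamma> + 2/\<alpha> + 2/\<epsilon> \<le> real (nat \<lceil>1/\<gamma> + 2/\<alpha> + 2/\<epsilon>\<rceil>)" by linarith
          also have "\<dots> \<le> real n" using n by simp
          finally show ?thesis .
        qed
        have pos: "1/\<gamma> > 0" "2/\<alpha> > 0" "2/\<epsilon> > 0" using g ae by auto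
        have md: "\<forall>v\<in>V. real (nbdeg E v V) \<ge> real (card V) / 2"
          using H unfolding min_degree_ge_def by auto
        obtain A0 where A0: "A0 \<subseteq> V" "card A0 = card V div 2"
            and e0: "real (edges_in E A0) \<le> \<gamma> * real (card V) ^ 2"
          using H unfolding gamma_close_def Let_def by auto
        obtain A where A: "A \<subseteq> V" "card A = card V div 2" "cutv V E A0 \<le> cutv V E A"
            and ori: "\<forall>b\<in>V - A. nbdeg E b (V - A) \<le> nbdeg E b A"
          using exists_good_A[OF sg A0] by blast
        have "real (cutv V E A) \<ge> real (card A) * real (card V) / 2 - 2 * \<gamma> * real (card V) ^ 2"
        proof -
          have "real (cutv V E A0) \<ge> real (card A0) * real (card V) / 2 - 2 * real (edges_in E A0)"
            by (rule cut_lower[OF sg md A0(1)])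
          moreover have "real (cutv V E A0) \<le> real (cutv V E A)" using A(3) by simp
          ultimately show ?thesis using e0 A(2) A0(2) by simp
        qed
        note Cl = this
        have n1: "real (card V) \<ge> 1 / \<gamma>" using rn pos cV by linarith
        have n2: "real (card V) \<ge> 2 / \<alpha>" using rn pos cV by linarith
        have n3: "real (card V) \<ge> 2 / \<epsilon>" using rn pos cV by linarith
        show "superextremal_biclique \<alpha> \<epsilon> \<nu> V E"
          by (rule core[OF sg md A(1) A(2) Cl ori _ _ _ _ _ _ _ _ n1 n2 n3]) (use nu ae g in auto)
      qed
    qed
  qed
qed


end
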